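(* Let $k\ge 2$ be an integer and $n=2k$. For every positive integer $s$, $$\alpha\big(I_{B_{2k}}^{(s(k-1))}\big)=sk.$$
   Context: Let $\mathbb{K}$ be a field. $Q_n$ is the cycle graph on vertices $1,\dots,n$ (edges $\{i,i+1\}$ for $1\le i\le n-1$ and $\{n,1\}$). $B_n$ is the simplicial complex on $\{0,\dots,n+1\}$ whose facets are $\{0,i,j\}$ and $\{n+1,i,j\}$ for each edge $\{i,j\}$ of $Q_n$ (boundary of the bipyramid over the $n$-gon), and $I_{B_n}\subset R=\mathbb{K}[x_0,\dots,x_{n+1}]$ is its Stanley-Reisner ideal, generated by $\prod_{i\in\tau}x_i$ over non-faces $\tau$. For a homogeneous ideal $I$, $I^{(m)}=R\cap\bigcap_{P\in\mathrm{Ass}(I)}I^mR_P$ and $\alpha(I)=\min\{t: I_t\ne 0\}$. *)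

theory Defs
  imports "HOL-Library.Poly_Mapping"
begin

text \<open>Polynomials in variables x_0, x_1, ... over a field 'k: finitely supported maps
  from monomials (exponent vectors nat =>0 nat) to coefficients.\<close>
type_synonym 'k mpoly = "(nat \<Rightarrow>\<^sub>0 nat) \<Rightarrow>\<^sub>0 'k"

text \<open>The ring R = K[x_0,...,x_N] as a subring (carrier) of 'k mpoly.\<close>
definition polyring :: "nat \<Rightarrow> ('k::field) mpoly set" where
  "polyring N = {p :: 'k mpoly. \<forall>m \<in> Poly_Mapping.keys p. Poly_Mapping.keys m \<subseteq> {..N}}"

definition var :: "nat \<Rightarrow> ('k::field) mpoly" where
  "var i = Poly_Mapping.single (Poly_Mapping.single i 1) 1"

definition mon_deg :: "(nat \<Rightarrow>\<^sub>0 nat) \<Rightarrow> nat" where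
  "mon_deg m = (\<Sum>i\<in>Poly_Mapping.keys m. Poly_Mapping.lookup m i)"

definition homogeneous_of :: "nat \<Rightarrow> ('k::field) mpoly \<Rightarrow> bool" where
  "homogeneous_of t f \<longleftrightarrow> (\<forall>m \<in> Poly_Mapping.keys f. mon_deg m = t)"

definition is_ideal :: "('k::field) mpoly set \<Rightarrow> 'k mpoly set \<Rightarrow> bool" where
  "is_ideal S I \<longleftrightarrow> I \<subseteq> S \<and> 0 \<in> I \<and> (\<forall>a\<in>I. \<forall>b\<in>I. a + b \<in> I)
     \<and> (\<forall>r\<in>S. \<forall>a\<in>I. r * a \<in> I)"

definition gen_ideal :: "('k::field) mpoly set \<Rightarrow> 'k mpoly set \<Rightarrow> 'k mpoly set" where
  "gen_ideal S G = \<Inter>{I. is_ideal S I \<and> G \<subseteq> I}"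

definition ideal_pow :: "('k::field) mpoly set \<Rightarrow> 'k mpoly set \<Rightarrow> nat \<Rightarrow> 'k mpoly set" where
  "ideal_pow S I m = gen_ideal S {prod_list xs | xs. length xs = m \<and> set xs \<subseteq> I}"

definition prime_ideal :: "('k::field) mpoly set \<Rightarrow> 'k mpoly set \<Rightarrow> bool" where
  "prime_ideal S P \<longleftrightarrow> is_ideal S P \<and> P \<noteq> S
     \<and> (\<forall>a\<in>S. \<forall>b\<in>S. a * b \<in> P \<longrightarrow> a \<in> P \<or> b \<in> P)"

definition colon :: "('k::field) mpoly set \<Rightarrow> 'k mpoly set \<Rightarrow> 'k mpoly \<Rightarrow> 'k mpoly set" where
  "colon S I g = {f \<in> S. f * g \<in> I}"

definition Ass :: "('k::field) mpoly set \<Rightarrow> 'k mpoly set \<Rightarrow> 'k mpoly set set" where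
  "Ass S I = {P. prime_ideal S P \<and> (\<exists>g\<in>S. P = colon S I g)}"

text \<open>Symbolic power I^(m) = R \<inter> \<Inter>_{P \<in> Ass I} I^m R_P, i.e. f in R such that for each
  associated prime P some u in R - P has u*f in I^m.\<close>
definition symbolic_power :: "('k::field) mpoly set \<Rightarrow> 'k mpoly set \<Rightarrow> nat \<Rightarrow> 'k mpoly set" where
  "symbolic_power S I m = {f \<in> S. \<forall>P \<in> Ass S I. \<exists>u \<in> S - P. u * f \<in> ideal_pow S I m}"

definition alpha :: "('k::field) mpoly set \<Rightarrow> nat" where
  "alpha I = (LEAST t. \<exists>f\<in>I. f \<noteq> 0 \<and> homogeneous_of t f)"

definition cycle_edges :: "nat \<Rightarrow> nat set set" where
  "cycle_edges n = {{i, i + 1} | i. 1 \<le> i \<and> i \<le> n - 1} \<union> {{n, 1}}"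

definition bipyr_facets :: "nat \<Rightarrow> nat set set" where
  "bipyr_facets n = {insert 0 e | e. e \<in> cycle_edges n} \<union> {insert (n + 1) e | e. e \<in> cycle_edges n}"

definition bipyr_face :: "nat \<Rightarrow> nat set \<Rightarrow> bool" where
  "bipyr_face n \<sigma> \<longleftrightarrow> (\<exists>F \<in> bipyr_facets n. \<sigma> \<subseteq> F)"

definition SR_ideal :: "nat \<Rightarrow> ('k::field) mpoly set" where
  "SR_ideal n = gen_ideal (polyring (n + 1))
     {(\<Prod>i\<in>\<tau>. var i) | \<tau>. \<tau> \<subseteq> {0..n + 1} \<and> \<not> bipyr_face n \<tau>}"

end

theory Submission imports Defs begin

lemma mp_idom_test: "(a::('k::field) mpoly) \<noteq> 0 \<Longrightarrow> b \<noteq> 0 \<Longrightarrow> a * b \<noteq> 0"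
  by simp

lemma keys_add_nat: "Poly_Mapping.keys ((a::nat \<Rightarrow>\<^sub>0 nat) + b) = Poly_Mapping.keys a \<union> Poly_Mapping.keys b"
  by (auto simp: in_keys_iff lookup_add)

lemma poly_sum_single: "p = (\<Sum>m\<in>Poly_Mapping.keys p. Poly_Mapping.single m (Poly_Mapping.lookup p m))"
proof (rule poly_mapping_eqI)
  fix x
  show "Poly_Mapping.lookup p x = Poly_Mapping.lookup (\<Sum>m\<in>Poly_Mapping.keys p. Poly_Mapping.single m (Poly_Mapping.lookup p m)) x"
    by (simp add: lookup_sum lookup_single when_def in_keys_iff)
qed

definition filt :: "('a \<Rightarrow> bool) \<Rightarrow> ('a \<Rightarrow>\<^sub>0 'b::comm_monoid_add) \<Rightarrow> ('a \<Rightarrow>\<^sub>0 'b)" where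
  "filt Q p = (\<Sum>m\<in>{m\<in>Poly_Mapping.keys p. Q m}. Poly_Mapping.single m (Poly_Mapping.lookup p m))"

lemma lookup_filt: "Poly_Mapping.lookup (filt Q p) x = (if Q x then Poly_Mapping.lookup p x else 0)"
  by (auto simp: filt_def lookup_sum lookup_single when_def in_keys_iff)

lemma keys_filt: "Poly_Mapping.keys (filt Q p) = {m \<in> Poly_Mapping.keys p. Q m}"
  by (auto simp: in_keys_iff lookup_filt split: if_splits)

lemma filt_split: "p = filt Q p + filt (\<lambda>m. \<not> Q m) p"
  by (rule poly_mapping_eqI) (simp add: lookup_add lookup_filt)

lemma keys_mult_pred:
  assumes "\<forall>m\<in>Poly_Mapping.keys p. A m" "\<forall>m\<in>Poly_Mapping.keys q. B m"
    "\<And>a b. A a \<Longrightarrow> B b \<Longrightarrow> C (a + b)"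
  shows "\<forall>m\<in>Poly_Mapping.keys (p * q). C m"
  using keys_mult[of p q] assms by blast

lemma keys_add_pred:
  assumes "\<forall>m\<in>Poly_Mapping.keys p. A m" "\<forall>m\<in>Poly_Mapping.keys q. A m"
  shows "\<forall>m\<in>Poly_Mapping.keys (p + q). A m"
  using keys_add[of p q] assms by blast

lemma lowest_weight:
  fixes p q :: "('k::field) mpoly" and w :: "(nat \<Rightarrow>\<^sub>0 nat) \<Rightarrow> nat"
  assumes wadd: "\<And>x y. w (x + y) = w x + w y"
    and pa: "\<forall>m\<in>Poly_Mapping.keys p. a \<le> w m" and pa': "\<exists>m\<in>Poly_Mapping.keys p. w m = a"
    and qb: "\<forall>m\<in>Poly_Mapping.keys q. b \<le> w m" and qb': "\<exists>m\<in>Poly_Mapping.keys q. w m = b"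
  shows "\<exists>m\<in>Poly_Mapping.keys (p * q). w m = a + b"
proof -
  define p0 where "p0 = filt (\<lambda>m. w m = a) p"
  define p1 where "p1 = filt (\<lambda>m. \<not> w m = a) p"
  define q0 where "q0 = filt (\<lambda>m. w m = b) q"
  define q1 where "q1 = filt (\<lambda>m. \<not> w m = b) q"
  have p: "p = p0 + p1" unfolding p0_def p1_def by (rule filt_split)
  have q: "q = q0 + q1" unfolding q0_def q1_def by (rule filt_split)
  have kp0: "\<forall>m\<in>Poly_Mapping.keys p0. w m = a" by (simp add: p0_def keys_filt)
  have kq0: "\<forall>m\<in>Poly_Mapping.keys q0. w m = b" by (simp add: q0_def keys_filt)
  have kp1: "\<forall>m\<in>Poly_Mapping.keys p1. a < w m" using pa by (auto simp add: p1_def keys_filt)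
  have kq1: "\<forall>m\<in>Poly_Mapping.keys q1. b < w m" using qb by (auto simp add: q1_def keys_filt)
  have kp: "\<forall>m\<in>Poly_Mapping.keys p0. a \<le> w m" using kp0 by simp
  have kq: "\<forall>m\<in>Poly_Mapping.keys q0. b \<le> w m" using kq0 by simp
  have "p0 \<noteq> 0" using pa' by (auto simp: p0_def keys_filt simp flip: keys_eq_empty)
  moreover have "q0 \<noteq> 0" using qb' by (auto simp: q0_def keys_filt simp flip: keys_eq_empty)
  ultimately have "p0 * q0 \<noteq> 0" by simp
  then obtain m where m: "m \<in> Poly_Mapping.keys (p0 * q0)" by (auto simp flip: keys_eq_empty)
  have wm: "w m = a + b" using keys_mult_pred[OF kp0 kq0, of "\<lambda>m. w m = a + b"] m wadd by auto
  define r where "r = p0 * q1 + p1 * q0 + p1 * q1"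
  have "\<forall>m\<in>Poly_Mapping.keys (p0 * q1). a + b < w m"
    by (rule keys_mult_pred[OF kp kq1]) (simp add: wadd)
  moreover have "\<forall>m\<in>Poly_Mapping.keys (p1 * q0). a + b < w m"
    by (rule keys_mult_pred[OF kp1 kq]) (simp add: wadd)
  moreover have "\<forall>m\<in>Poly_Mapping.keys (p1 * q1). a + b < w m"
    by (rule keys_mult_pred[OF kp1 kq1]) (simp add: wadd)
  ultimately have kr: "\<forall>m\<in>Poly_Mapping.keys r. a + b < w m"
    unfolding r_def by (intro keys_add_pred) auto
  have pq: "p * q = p0 * q0 + r" unfolding r_def p q by (simp add: algebra_simps)
  have "Poly_Mapping.lookup r m = 0" using kr wm by (metis in_keys_iff less_irrefl)
  hence "Poly_Mapping.lookup (p * q) m \<noteq> 0" using m by (simp add: pq lookup_add in_keys_iff)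
  thus ?thesis using wm by (auto simp: in_keys_iff)
qed

lemma polyring_add: "p \<in> polyring N \<Longrightarrow> q \<in> polyring N \<Longrightarrow> p + q \<in> polyring N"
  unfolding polyring_def using keys_add[of p q] by auto

lemma polyring_mult:
  assumes "p \<in> polyring N" "q \<in> polyring N" shows "p * q \<in> polyring N"
proof -
  have "\<forall>m\<in>Poly_Mapping.keys (p * q). Poly_Mapping.keys m \<subseteq> {..N}"
    by (rule keys_mult_pred[of p "\<lambda>m. Poly_Mapping.keys m \<subseteq> {..N}" q "\<lambda>m. Poly_Mapping.keys m \<subseteq> {..N}"])
       (use assms in \<open>auto simp: polyring_def keys_add_nat\<close>)
  thus ?thesis by (simp add: polyring_def)
qed

lemma polyring_single: "Poly_Mapping.keys m \<subseteq> {..N} \<Longrightarrow> Poly_Mapping.single m c \<in> polyring N"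
  unfolding polyring_def by auto

lemma polyring_zero: "0 \<in> polyring N"
  unfolding polyring_def by auto

lemma polyring_one: "1 \<in> polyring N"
  unfolding polyring_def by auto

lemma polyring_var: "i \<le> N \<Longrightarrow> var i \<in> polyring N"
  unfolding var_def by (rule polyring_single) auto

lemma polyring_power: "p \<in> polyring N \<Longrightarrow> p ^ e \<in> polyring N"
  by (induction e) (auto intro: polyring_mult polyring_one)

lemma polyring_prod: "(\<And>x. x \<in> A \<Longrightarrow> f x \<in> polyring N) \<Longrightarrow> prod f A \<in> polyring N"
  by (induction A rule: infinite_finite_induct) (auto intro: polyring_mult polyring_one)

lemma is_ideal_S: "is_ideal (polyring N) (polyring N)"
  unfolding is_ideal_def by (auto intro: polyring_add polyring_mult polyring_zero)

lemma gen_ideal_is_ideal: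
  fixes G :: "('k::field) mpoly set"
  assumes "G \<subseteq> polyring N"
  shows "is_ideal (polyring N) (gen_ideal (polyring N) G)"
proof -
  let ?X = "{I. is_ideal (polyring N) I \<and> G \<subseteq> I}"
  have "polyring N \<in> ?X" using assms is_ideal_S by auto
  show ?thesis unfolding is_ideal_def
  proof (intro conjI ballI)
    show "gen_ideal (polyring N) G \<subseteq> polyring N"
      using \<open>polyring N \<in> ?X\<close> unfolding gen_ideal_def by (rule Inter_lower)
    show "0 \<in> gen_ideal (polyring N) G" unfolding gen_ideal_def by (auto simp: is_ideal_def)
  next
    fix a b assume "a \<in> gen_ideal (polyring N) G" "b \<in> gen_ideal (polyring N) G"
    thus "a + b \<in> gen_ideal (polyring N) G" unfolding gen_ideal_def by (auto simp: is_ideal_def)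
  next
    fix r a :: "'k mpoly" assume "r \<in> polyring N" "a \<in> gen_ideal (polyring N) G"
    thus "r * a \<in> gen_ideal (polyring N) G" unfolding gen_ideal_def by (auto simp: is_ideal_def)
  qed
qed

lemma gen_ideal_sub: "G \<subseteq> gen_ideal S G"
  unfolding gen_ideal_def by blast

lemma gen_ideal_least: "is_ideal S J \<Longrightarrow> G \<subseteq> J \<Longrightarrow> gen_ideal S G \<subseteq> J"
  unfolding gen_ideal_def by blast

lemma ideal_sum: "is_ideal S I \<Longrightarrow> (\<And>x. x \<in> A \<Longrightarrow> f x \<in> I) \<Longrightarrow> sum f A \<in> I"
  by (induction A rule: infinite_finite_induct) (auto simp: is_ideal_def)

lemma ideal_mult: "is_ideal S I \<Longrightarrow> r \<in> S \<Longrightarrow> a \<in> I \<Longrightarrow> r * a \<in> I"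
  by (auto simp: is_ideal_def)

definition polyset :: "nat \<Rightarrow> ((nat \<Rightarrow>\<^sub>0 nat) \<Rightarrow> bool) \<Rightarrow> ('k::field) mpoly set" where
  "polyset N Q = {p \<in> polyring N. \<forall>m\<in>Poly_Mapping.keys p. Q m}"

lemma polyset_ideal:
  assumes "\<And>a b. Q b \<Longrightarrow> Q (a + b)"
  shows "is_ideal (polyring N) (polyset N Q)"
  unfolding is_ideal_def polyset_def
proof (intro conjI ballI)
  fix p q :: "'a mpoly"
  assume "p \<in> {p \<in> polyring N. \<forall>m\<in>Poly_Mapping.keys p. Q m}" "q \<in> {p \<in> polyring N. \<forall>m\<in>Poly_Mapping.keys p. Q m}"
  thus "p + q \<in> {p \<in> polyring N. \<forall>m\<in>Poly_Mapping.keys p. Q m}"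
    using keys_add_pred[of p Q q] polyring_add by blast
next
  fix r p :: "'a mpoly"
  assume r: "r \<in> polyring N" and "p \<in> {p \<in> polyring N. \<forall>m\<in>Poly_Mapping.keys p. Q m}"
  moreover have "\<forall>m\<in>Poly_Mapping.keys (r * p). Q m"
    by (rule keys_mult_pred[of r "\<lambda>_. True" p Q]) (use calculation assms in auto)
  ultimately show "r * p \<in> {p \<in> polyring N. \<forall>m\<in>Poly_Mapping.keys p. Q m}"
    using polyring_mult by blast
qed (auto simp: polyring_zero)


definition ind :: "nat set \<Rightarrow> (nat \<Rightarrow>\<^sub>0 nat)" where
  "ind \<tau> = (\<Sum>i\<in>\<tau>. Poly_Mapping.single i 1)"

lemma lookup_ind: "finite \<tau> \<Longrightarrow> Poly_Mapping.lookup (ind \<tau>) j = (if j \<in> \<tau> then 1 else 0)"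
  by (simp add: ind_def lookup_sum lookup_single when_def)

lemma keys_ind: "finite \<tau> \<Longrightarrow> Poly_Mapping.keys (ind \<tau>) = \<tau>"
  by (auto simp: in_keys_iff lookup_ind split: if_splits)

lemma prod_var: "finite \<tau> \<Longrightarrow> (\<Prod>i\<in>\<tau>. var i) = (Poly_Mapping.single (ind \<tau>) 1 :: ('k::field) mpoly)"
proof (induction \<tau> rule: finite_induct)
  case empty
  then show ?case by (simp add: ind_def)
next
  case (insert x F)
  then show ?case by (simp add: ind_def var_def mult_single add.commute)
qed

lemma var_power: "(var i :: ('k::field) mpoly) ^ e = Poly_Mapping.single (Poly_Mapping.single i e) 1"
proof (induction e)
  case 0 then show ?case by simp
next
  case (Suc e) then show ?case by (simp add: var_def mult_single flip: single_add)
qed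

lemma single_mult_split: "Poly_Mapping.single (a + b) c = Poly_Mapping.single a c * (Poly_Mapping.single b 1 :: ('k::field) mpoly)"
  by (simp add: mult_single)

lemma face_mono: "bipyr_face n \<tau> \<Longrightarrow> \<sigma> \<subseteq> \<tau> \<Longrightarrow> bipyr_face n \<sigma>"
  unfolding bipyr_face_def by blast

lemma edge_cases: "e \<in> cycle_edges n \<Longrightarrow> (\<exists>i. 1 \<le> i \<and> i \<le> n - 1 \<and> e = {i, i+1}) \<or> e = {n, 1}"
  unfolding cycle_edges_def by auto

lemma facet_cases: "F \<in> bipyr_facets n \<Longrightarrow> \<exists>a e. (a = 0 \<or> a = n + 1) \<and> e \<in> cycle_edges n \<and> F = insert a e"
  unfolding bipyr_facets_def by auto

lemma edge_props:
  assumes "4 \<le> n" "e \<in> cycle_edges n"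
  shows "finite e \<and> card e = 2 \<and> e \<subseteq> {1..n}"
  using edge_cases[OF assms(2)] assms(1) by (auto simp: card_insert_if)

lemma facet_props:
  assumes "4 \<le> n" "F \<in> bipyr_facets n"
  shows "finite F \<and> card F = 3 \<and> F \<subseteq> {..n+1}"
proof -
  obtain a e where a: "a = 0 \<or> a = n + 1" and e: "e \<in> cycle_edges n" and F: "F = insert a e"
    using facet_cases[OF assms(2)] by blast
  have "finite e" "card e = 2" "e \<subseteq> {1..n}" using edge_props[OF assms(1) e] by auto
  moreover have "a \<notin> e" using a \<open>e \<subseteq> {1..n}\<close> by auto
  ultimately show ?thesis using F a by auto
qed

lemma face_finite: "4 \<le> n \<Longrightarrow> bipyr_face n \<sigma> \<Longrightarrow> finite \<sigma>"
  unfolding bipyr_face_def using facet_props finite_subset by blast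

lemma facet_face: "F \<in> bipyr_facets n \<Longrightarrow> \<sigma> \<subseteq> F \<Longrightarrow> bipyr_face n \<sigma>"
  unfolding bipyr_face_def by blast

lemma facet_extend_nonface:
  assumes "4 \<le> n" "F \<in> bipyr_facets n" "j \<notin> F" "insert j F \<subseteq> \<sigma>"
  shows "\<not> bipyr_face n \<sigma>"
proof
  assume "bipyr_face n \<sigma>"
  then obtain F' where F': "F' \<in> bipyr_facets n" "\<sigma> \<subseteq> F'" unfolding bipyr_face_def by blast
  have "finite F'" "card F' = 3" using facet_props[OF assms(1) F'(1)] by auto
  moreover have "finite F" "card F = 3" using facet_props[OF assms(1,2)] by auto
  ultimately have "card (insert j F) = 4" using assms(3) by simp
  moreover have "card (insert j F) \<le> card F'"
    using card_mono[OF \<open>finite F'\<close>] assms(4) F'(2) by blast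
  ultimately show False using \<open>card F' = 3\<close> by simp
qed

lemma facet_odd:
  assumes "4 \<le> n" "F \<in> bipyr_facets n"
  shows "\<exists>c\<in>F. odd c \<and> 1 \<le> c \<and> c \<le> n"
proof -
  obtain a e where e: "e \<in> cycle_edges n" and F: "F = insert a e"
    using facet_cases[OF assms(2)] by blast
  from edge_cases[OF e] show ?thesis
  proof
    assume "\<exists>i. 1 \<le> i \<and> i \<le> n - 1 \<and> e = {i, i+1}"
    then obtain i where i: "1 \<le> i" "i \<le> n - 1" "e = {i, i+1}" by blast
    show ?thesis
    proof (cases "odd i")
      case True then show ?thesis using i F by auto
    next
      case False then show ?thesis using i F assms(1) by (intro bexI[of _ "i+1"]) auto
    qed
  next
    assume "e = {n, 1}" then show ?thesis using F assms(1) by auto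
  qed
qed

lemma odd_pair_nonface:
  assumes "4 \<le> n" "even n" "odd v" "odd c" "v \<noteq> c" "1 \<le> v" "v \<le> n" "1 \<le> c" "c \<le> n"
  shows "\<not> bipyr_face n {v, c}"
proof
  assume "bipyr_face n {v, c}"
  then obtain F where F: "F \<in> bipyr_facets n" "{v, c} \<subseteq> F" unfolding bipyr_face_def by blast
  obtain a e where a: "a = 0 \<or> a = n + 1" and e: "e \<in> cycle_edges n" and Fe: "F = insert a e"
    using facet_cases[OF F(1)] by blast
  have ve: "{v, c} \<subseteq> e" using F(2) Fe a assms by auto
  from edge_cases[OF e] show False
  proof
    assume "\<exists>i. 1 \<le> i \<and> i \<le> n - 1 \<and> e = {i, i+1}"
    then obtain i where "e = {i, i+1}" by blast
    then show False using ve assms(3,4,5) by auto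
  next
    assume "e = {n, 1}" then show False using ve assms by auto
  qed
qed


subsection \<open>Weights and monomial ideals\<close>

definition dF :: "nat \<Rightarrow> nat set \<Rightarrow> (nat \<Rightarrow>\<^sub>0 nat) \<Rightarrow> nat" where
  "dF N F m = (\<Sum>j\<in>{..N} - F. Poly_Mapping.lookup m j)"

lemma dF_add: "dF N F (a + b) = dF N F a + dF N F b"
  by (simp add: dF_def lookup_add sum.distrib)

lemma dF_zero_iff:
  assumes "Poly_Mapping.keys m \<subseteq> {..N}"
  shows "dF N F m = 0 \<longleftrightarrow> Poly_Mapping.keys m \<subseteq> F"
proof -
  have "dF N F m = 0 \<longleftrightarrow> (\<forall>j\<in>{..N} - F. Poly_Mapping.lookup m j = 0)"
    by (simp add: dF_def)
  also have "\<dots> \<longleftrightarrow> Poly_Mapping.keys m \<subseteq> F"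
    using assms by (auto simp: in_keys_iff)
  finally show ?thesis .
qed

lemma le1_iff [simp]: "Suc 0 \<le> (x::nat) \<longleftrightarrow> x \<noteq> 0"
  by auto

definition NI :: "nat \<Rightarrow> ('k::field) mpoly set" where
  "NI n = polyset (n + 1) (\<lambda>m. \<not> bipyr_face n (Poly_Mapping.keys m))"

definition DF :: "nat \<Rightarrow> nat set \<Rightarrow> nat \<Rightarrow> ('k::field) mpoly set" where
  "DF n F M = polyset (n + 1) (\<lambda>m. M \<le> dF (n + 1) F m)"

lemma NI_ideal: "is_ideal (polyring (n + 1)) (NI n)"
  unfolding NI_def
  by (rule polyset_ideal) (auto simp: keys_add_nat dest: face_mono)

lemma DF_ideal: "is_ideal (polyring (n + 1)) (DF n F M)"
  unfolding DF_def
  by (rule polyset_ideal) (auto simp: dF_add)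

lemma SR_sub_NI: "SR_ideal n \<subseteq> (NI n :: ('k::field) mpoly set)"
  unfolding SR_ideal_def
proof (rule gen_ideal_least[OF NI_ideal], safe)
  fix \<tau> assume t: "\<tau> \<subseteq> {0..n+1}" "\<not> bipyr_face n \<tau>"
  have f: "finite \<tau>" using t(1) finite_subset by blast
  show "(\<Prod>i\<in>\<tau>. var i) \<in> (NI n :: 'k mpoly set)"
    using t f by (auto simp: prod_var NI_def polyset_def keys_ind intro!: polyring_single)
qed

lemma gens_in_S: "\<tau> \<subseteq> {0..N} \<Longrightarrow> (\<Prod>i\<in>\<tau>. var i) \<in> (polyring N :: ('k::field) mpoly set)"
  by (rule polyring_prod, rule polyring_var) auto

lemma single_in_SR:
  assumes "Poly_Mapping.keys m \<subseteq> {..n+1}" "\<not> bipyr_face n (Poly_Mapping.keys m)"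
  shows "Poly_Mapping.single m c \<in> (SR_ideal n :: ('k::field) mpoly set)"
proof -
  let ?g = "ind (Poly_Mapping.keys m)"
  have fk: "finite (Poly_Mapping.keys m)" by simp
  have m: "m = (m - ?g) + ?g"
    by (rule poly_mapping_eqI) (auto simp: lookup_add lookup_minus lookup_ind[OF fk] in_keys_iff)
  have "Poly_Mapping.single m c = Poly_Mapping.single (m - ?g) c * (Poly_Mapping.single ?g 1 :: 'k mpoly)"
    by (subst m) (simp add: mult_single)
  moreover have "Poly_Mapping.single (m - ?g) c \<in> (polyring (n+1) :: 'k mpoly set)"
  proof (rule polyring_single)
    have "Poly_Mapping.keys (m - ?g) \<subseteq> Poly_Mapping.keys m"
    proof
      fix x assume "x \<in> Poly_Mapping.keys (m - ?g)"
      hence "Poly_Mapping.lookup m x - Poly_Mapping.lookup ?g x \<noteq> 0" by (simp add: in_keys_iff lookup_minus)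
      hence "Poly_Mapping.lookup m x \<noteq> 0" by auto
      thus "x \<in> Poly_Mapping.keys m" by (simp add: in_keys_iff)
    qed
    thus "Poly_Mapping.keys (m - ?g) \<subseteq> {..n+1}" using assms(1) by blast
  qed
  moreover have "(Poly_Mapping.single ?g 1 :: 'k mpoly) \<in> SR_ideal n"
  proof -
    have "(\<Prod>i\<in>Poly_Mapping.keys m. var i) \<in> (SR_ideal n :: 'k mpoly set)"
      unfolding SR_ideal_def
      by (rule subsetD[OF gen_ideal_sub]) (use assms in \<open>auto simp: atLeast0AtMost\<close>)
    thus ?thesis by (simp add: prod_var)
  qed
  moreover have "is_ideal (polyring (n+1)) (SR_ideal n :: 'k mpoly set)"
    unfolding SR_ideal_def
    by (rule gen_ideal_is_ideal) (auto intro: gens_in_S)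
  ultimately show ?thesis by (metis ideal_mult)
qed

lemma SR_ideal_is_ideal: "is_ideal (polyring (n+1)) (SR_ideal n :: ('k::field) mpoly set)"
  unfolding SR_ideal_def
  by (rule gen_ideal_is_ideal) (auto intro: gens_in_S)

lemma NI_sub_SR: "NI n \<subseteq> (SR_ideal n :: ('k::field) mpoly set)"
proof
  fix p :: "'k mpoly" assume p: "p \<in> NI n"
  have "p = (\<Sum>m\<in>Poly_Mapping.keys p. Poly_Mapping.single m (Poly_Mapping.lookup p m))"
    by (rule poly_sum_single)
  also have "\<dots> \<in> SR_ideal n"
  proof (rule ideal_sum[OF SR_ideal_is_ideal])
    fix m assume "m \<in> Poly_Mapping.keys p"
    thus "Poly_Mapping.single m (Poly_Mapping.lookup p m) \<in> (SR_ideal n :: 'k mpoly set)"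
      using p by (intro single_in_SR) (auto simp: NI_def polyset_def polyring_def)
  qed
  finally show "p \<in> SR_ideal n" .
qed

lemma SR_eq_NI: "SR_ideal n = (NI n :: ('k::field) mpoly set)"
  using SR_sub_NI NI_sub_SR by blast


subsection \<open>The facet primes\<close>

lemma facet_sub: "4 \<le> n \<Longrightarrow> F \<in> bipyr_facets n \<Longrightarrow> F \<subseteq> {..n+1}"
  using facet_props by blast

lemma facet_fin: "4 \<le> n \<Longrightarrow> F \<in> bipyr_facets n \<Longrightarrow> finite F"
  using facet_props by blast

lemma dF_ind: "finite F \<Longrightarrow> F \<subseteq> {..N} \<Longrightarrow> dF N F (ind F) = 0"
  by (subst dF_zero_iff) (auto simp: keys_ind)

lemma single_ind_S: "finite F \<Longrightarrow> F \<subseteq> {..N} \<Longrightarrow> Poly_Mapping.single (ind F) 1 \<in> (polyring N :: ('k::field) mpoly set)"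
  by (rule polyring_single) (simp add: keys_ind)

lemma one_notin_PF: "(1 :: ('k::field) mpoly) \<notin> DF n F 1"
  by (simp add: DF_def polyset_def dF_def)

lemma not_in_DF1:
  assumes "a \<in> polyring (n+1)" "a \<notin> (DF n F 1 :: ('k::field) mpoly set)"
  shows "\<exists>m\<in>Poly_Mapping.keys a. dF (n+1) F m = 0"
  using assms by (auto simp: DF_def polyset_def)

lemma PF_prime:
  assumes "a \<in> polyring (n+1)" "b \<in> polyring (n+1)" "a * b \<in> (DF n F 1 :: ('k::field) mpoly set)"
  shows "a \<in> DF n F 1 \<or> b \<in> DF n F 1"
proof (rule ccontr)
  assume "\<not> ?thesis"
  hence "\<exists>m\<in>Poly_Mapping.keys a. dF (n+1) F m = 0" "\<exists>m\<in>Poly_Mapping.keys b. dF (n+1) F m = 0"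
    using not_in_DF1 assms by blast+
  hence "\<exists>m\<in>Poly_Mapping.keys (a * b). dF (n+1) F m = 0 + 0"
    by (intro lowest_weight) (auto simp: dF_add)
  thus False using assms(3) by (auto simp: DF_def polyset_def)
qed

lemma NI_sub_PF:
  assumes "4 \<le> n" "F \<in> bipyr_facets n"
  shows "NI n \<subseteq> (DF n F 1 :: ('k::field) mpoly set)"
proof
  fix p :: "'k mpoly" assume "p \<in> NI n"
  hence p: "p \<in> polyring (n+1)" "\<forall>m\<in>Poly_Mapping.keys p. \<not> bipyr_face n (Poly_Mapping.keys m)"
    by (auto simp: NI_def polyset_def)
  have "\<forall>m\<in>Poly_Mapping.keys p. 1 \<le> dF (n+1) F m"
  proof
    fix m assume m: "m \<in> Poly_Mapping.keys p"
    hence km: "Poly_Mapping.keys m \<subseteq> {..n+1}" using p(1) by (auto simp: polyring_def)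
    show "1 \<le> dF (n+1) F m"
    proof (rule ccontr)
      assume "\<not> 1 \<le> dF (n+1) F m"
      hence "Poly_Mapping.keys m \<subseteq> F" using dF_zero_iff[OF km] by simp
      thus False using p(2) m facet_face[OF assms(2)] by blast
    qed
  qed
  thus "p \<in> DF n F 1" using p by (simp add: DF_def polyset_def)
qed

lemma PF_colon:
  assumes n: "4 \<le> n" and F: "F \<in> bipyr_facets n"
  shows "DF n F 1 = colon (polyring (n+1)) (SR_ideal n :: ('k::field) mpoly set) (Poly_Mapping.single (ind F) 1)"
proof -
  have fF: "finite F" and sF: "F \<subseteq> {..n+1}" using facet_props[OF n F] by auto
  have xS: "(Poly_Mapping.single (ind F) 1 :: 'k mpoly) \<in> polyring (n+1)" by (rule single_ind_S[OF fF sF])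
  show ?thesis unfolding colon_def SR_eq_NI
  proof (intro equalityI subsetI CollectI conjI)
    fix p :: "'k mpoly" assume p: "p \<in> DF n F 1"
    hence pS: "p \<in> polyring (n+1)" and pk: "\<forall>m\<in>Poly_Mapping.keys p. Poly_Mapping.keys m \<subseteq> {..n+1} \<and> 1 \<le> dF (n+1) F m"
      by (auto simp: DF_def polyset_def polyring_def)
    show "p \<in> polyring (n+1)" by (rule pS)
    have kx: "\<forall>m\<in>Poly_Mapping.keys (Poly_Mapping.single (ind F) (1::'k)). m = ind F" by simp
    have "\<forall>m\<in>Poly_Mapping.keys (p * Poly_Mapping.single (ind F) 1). \<not> bipyr_face n (Poly_Mapping.keys m)"
    proof (rule keys_mult_pred[OF pk kx])
      fix a b :: "nat \<Rightarrow>\<^sub>0 nat"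
      assume a: "Poly_Mapping.keys a \<subseteq> {..n+1} \<and> 1 \<le> dF (n+1) F a" and b: "b = ind F"
      then obtain j where j: "j \<in> Poly_Mapping.keys a" "j \<notin> F"
        using dF_zero_iff[of a "n+1" F] by fastforce
      have "insert j F \<subseteq> Poly_Mapping.keys (a + b)" using j b fF by (simp add: keys_add_nat keys_ind)
      thus "\<not> bipyr_face n (Poly_Mapping.keys (a + b))"
        by (rule facet_extend_nonface[OF n F j(2)])
    qed
    thus "p * Poly_Mapping.single (ind F) 1 \<in> NI n"
      using polyring_mult[OF pS xS] by (simp add: NI_def polyset_def)
  next
    fix p :: "'k mpoly" assume p: "p \<in> {f \<in> polyring (n + 1). f * Poly_Mapping.single (ind F) 1 \<in> NI n}"
    hence pS: "p \<in> polyring (n+1)" and pN: "p * Poly_Mapping.single (ind F) 1 \<in> NI n" by auto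
    show "p \<in> DF n F 1"
    proof (rule ccontr)
      assume "p \<notin> DF n F 1"
      hence "\<exists>m\<in>Poly_Mapping.keys p. dF (n+1) F m = 0" using not_in_DF1 pS by blast
      hence "\<exists>m\<in>Poly_Mapping.keys (p * Poly_Mapping.single (ind F) 1). dF (n+1) F m = 0 + 0"
        using dF_ind[OF fF sF] by (intro lowest_weight) (auto simp: dF_add)
      then obtain m where m: "m \<in> Poly_Mapping.keys (p * Poly_Mapping.single (ind F) 1)" "dF (n+1) F m = 0"
        by auto
      have "Poly_Mapping.keys m \<subseteq> {..n+1}" using m(1) polyring_mult[OF pS xS] by (auto simp: polyring_def)
      hence "Poly_Mapping.keys m \<subseteq> F" using m(2) dF_zero_iff by blast
      hence "bipyr_face n (Poly_Mapping.keys m)" by (rule facet_face[OF F])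
      thus False using pN m(1) by (auto simp: NI_def polyset_def)
    qed
  qed
qed

lemma PF_Ass:
  assumes n: "4 \<le> n" and F: "F \<in> bipyr_facets n"
  shows "DF n F 1 \<in> Ass (polyring (n+1)) (SR_ideal n :: ('k::field) mpoly set)"
proof -
  have fF: "finite F" and sF: "F \<subseteq> {..n+1}" using facet_props[OF n F] by auto
  have "prime_ideal (polyring (n+1)) (DF n F 1 :: 'k mpoly set)"
    unfolding prime_ideal_def using DF_ideal one_notin_PF polyring_one PF_prime by blast
  thus ?thesis unfolding Ass_def using PF_colon[OF n F] single_ind_S[OF fF sF] by blast
qed

lemma Ass_sub_PF:
  assumes n: "4 \<le> n" and P: "P \<in> Ass (polyring (n+1)) (SR_ideal n :: ('k::field) mpoly set)"
  shows "\<exists>F\<in>bipyr_facets n. P \<subseteq> DF n F 1"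
proof -
  obtain g where g: "g \<in> polyring (n+1)" and Pc: "P = colon (polyring (n+1)) (SR_ideal n) g"
    and pr: "prime_ideal (polyring (n+1)) P" using P unfolding Ass_def by blast
  have "g \<notin> NI n"
  proof
    assume "g \<in> NI n"
    hence "\<forall>f\<in>polyring (n+1). f * g \<in> SR_ideal n"
      using ideal_mult[OF NI_ideal] SR_eq_NI by metis
    hence "P = polyring (n+1)" unfolding Pc colon_def by auto
    thus False using pr by (simp add: prime_ideal_def)
  qed
  then obtain m where m: "m \<in> Poly_Mapping.keys g" "bipyr_face n (Poly_Mapping.keys m)"
    using g by (auto simp: NI_def polyset_def)
  then obtain F where F: "F \<in> bipyr_facets n" "Poly_Mapping.keys m \<subseteq> F" unfolding bipyr_face_def by blast
  have km: "Poly_Mapping.keys m \<subseteq> {..n+1}" using g m(1) by (auto simp: polyring_def)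
  have "dF (n+1) F m = 0" using F(2) dF_zero_iff[OF km] by simp
  hence gF: "g \<notin> DF n F 1" using m(1) by (auto simp: DF_def polyset_def)
  have "P \<subseteq> DF n F 1"
  proof
    fix h assume "h \<in> P"
    hence h: "h \<in> polyring (n+1)" "h * g \<in> SR_ideal n" unfolding Pc colon_def by auto
    hence "h * g \<in> DF n F 1" using NI_sub_PF[OF n F(1)] SR_eq_NI by blast
    thus "h \<in> DF n F 1" using PF_prime[OF h(1) g] gF by blast
  qed
  thus ?thesis using F(1) by blast
qed


subsection \<open>Lower bound on monomials\<close>

lemma DF_mult:
  assumes "a \<in> DF n F i" "b \<in> DF n F j"
  shows "a * b \<in> (DF n F (i + j) :: ('k::field) mpoly set)"
proof -
  have "\<forall>m\<in>Poly_Mapping.keys (a * b). i + j \<le> dF (n+1) F m"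
    by (rule keys_mult_pred[of a "\<lambda>m. i \<le> dF (n+1) F m" b "\<lambda>m. j \<le> dF (n+1) F m"])
       (use assms in \<open>auto simp: DF_def polyset_def dF_add\<close>)
  thus ?thesis using assms polyring_mult by (auto simp: DF_def polyset_def)
qed

lemma prod_list_DF:
  assumes n: "4 \<le> n" and F: "F \<in> bipyr_facets n" and xs: "set xs \<subseteq> (SR_ideal n :: ('k::field) mpoly set)"
  shows "prod_list xs \<in> DF n F (length xs)"
  using xs
proof (induction xs)
  case Nil
  then show ?case by (simp add: DF_def polyset_def polyring_one)
next
  case (Cons x xs)
  have "x \<in> DF n F 1" using Cons.prems NI_sub_PF[OF n F] SR_eq_NI by auto
  from DF_mult[OF this Cons.IH] Cons.prems show ?case by simp
qed

lemma SR_sub_S: "SR_ideal n \<subseteq> (polyring (n+1) :: ('k::field) mpoly set)"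
  using SR_ideal_is_ideal[of n] unfolding is_ideal_def by blast

lemma prod_list_S: "set xs \<subseteq> polyring N \<Longrightarrow> prod_list xs \<in> polyring N"
  by (induction xs) (auto intro: polyring_mult polyring_one)

lemma pow_gens_S: "{prod_list xs | xs. length xs = M \<and> set xs \<subseteq> SR_ideal n} \<subseteq> (polyring (n+1) :: ('k::field) mpoly set)"
  using SR_sub_S prod_list_S by blast

lemma ideal_pow_sub_DF:
  assumes n: "4 \<le> n" and F: "F \<in> bipyr_facets n"
  shows "ideal_pow (polyring (n+1)) (SR_ideal n) M \<subseteq> (DF n F M :: ('k::field) mpoly set)"
  unfolding ideal_pow_def
  by (rule gen_ideal_least[OF DF_ideal]) (use prod_list_DF[OF n F] in auto)

lemma sympow_lower:
  assumes n: "4 \<le> n" and F: "F \<in> bipyr_facets n"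
    and f: "f \<in> symbolic_power (polyring (n+1)) (SR_ideal n :: ('k::field) mpoly set) M"
    and m: "m \<in> Poly_Mapping.keys f"
  shows "M \<le> dF (n+1) F m"
proof -
  obtain u where u: "u \<in> polyring (n+1)" "u \<notin> DF n F 1" "u * f \<in> ideal_pow (polyring (n+1)) (SR_ideal n) M"
    using f PF_Ass[OF n F] unfolding symbolic_power_def by blast
  have uf: "u * f \<in> DF n F M" using u(3) ideal_pow_sub_DF[OF n F] by blast
  define a where "a = Min (dF (n+1) F ` Poly_Mapping.keys f)"
  have fin: "finite (dF (n+1) F ` Poly_Mapping.keys f)" by simp
  have ne: "dF (n+1) F ` Poly_Mapping.keys f \<noteq> {}" using m by auto
  have a1: "\<forall>m\<in>Poly_Mapping.keys f. a \<le> dF (n+1) F m" unfolding a_def using fin by auto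
  have a2: "\<exists>m\<in>Poly_Mapping.keys f. dF (n+1) F m = a" unfolding a_def using Min_in[OF fin ne] by auto
  have "\<exists>m\<in>Poly_Mapping.keys (u * f). dF (n+1) F m = 0 + a"
    using not_in_DF1[OF u(1,2)] a1 a2 by (intro lowest_weight) (auto simp: dF_add)
  hence "M \<le> a" using uf by (auto simp: DF_def polyset_def)
  thus ?thesis using a1 m by auto
qed

lemma dF_split:
  assumes "a \<le> N" "b \<le> N" "c \<le> N" "a \<noteq> b" "a \<noteq> c" "b \<noteq> c"
  shows "dF N {a, b, c} m + Poly_Mapping.lookup m a + Poly_Mapping.lookup m b + Poly_Mapping.lookup m c
    = (\<Sum>j\<le>N. Poly_Mapping.lookup m j)"
proof -
  have "(\<Sum>j\<le>N. Poly_Mapping.lookup m j) = (\<Sum>j\<in>{..N} - {a,b,c}. Poly_Mapping.lookup m j) + (\<Sum>j\<in>{a,b,c}. Poly_Mapping.lookup m j)"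
    using assms by (subst sum.subset_diff[of "{a,b,c}"]) auto
  thus ?thesis using assms by (simp add: dF_def)
qed

lemma pair_sum: fixes k :: nat and m :: "nat \<Rightarrow>\<^sub>0 nat" shows "(\<Sum>i<k. Poly_Mapping.lookup m (2*i+1) + Poly_Mapping.lookup m (2*i+2)) = (\<Sum>j\<in>{1..2*k}. Poly_Mapping.lookup m j)"
proof (induction k)
  case 0 then show ?case by simp
next
  case (Suc k)
  have "{1..2 * Suc k} = insert (2*k+2) (insert (2*k+1) {1..2*k})" by auto
  then show ?case using Suc by simp
qed

lemma total_split: fixes k :: nat and m :: "nat \<Rightarrow>\<^sub>0 nat" shows "(\<Sum>j\<le>2*k+1. Poly_Mapping.lookup m j) = Poly_Mapping.lookup m 0 + (\<Sum>j\<in>{1..2*k}. Poly_Mapping.lookup m j) + Poly_Mapping.lookup m (2*k+1)"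
proof -
  have "{..2*k+1} = insert 0 (insert (2*k+1) {1..2*k})" by auto
  thus ?thesis by simp
qed

lemma facetA: "i < k \<Longrightarrow> {0, 2*i+1, 2*i+2} \<in> bipyr_facets (2*k)"
  unfolding bipyr_facets_def cycle_edges_def
  by (rule UnI1, rule CollectI, rule exI[of _ "{2*i+1, 2*i+2}"]) auto

lemma facetB: "i < k \<Longrightarrow> {2*k+1, 2*i+1, 2*i+2} \<in> bipyr_facets (2*k)"
  unfolding bipyr_facets_def cycle_edges_def
  by (rule UnI2, rule CollectI, rule exI[of _ "{2*i+1, 2*i+2}"]) auto

lemma sum_const_plus: "(\<Sum>i<k. (c::nat) + f i) = k * c + sum f {..<k}"
  by (simp add: sum.distrib)

lemma sum_constant_nat: "(\<Sum>i<k. (c::nat)) = k * c"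
  by simp

lemma final_arith:
  fixes k s a b T t :: nat
  assumes k: "2 \<le> k" and h1: "k * (s * (k - 1) + a) + T \<le> k * t" and h2: "k * (s * (k - 1) + b) + T \<le> k * t"
    and h3: "t = a + T + b"
  shows "s * k \<le> t"
proof -
  let ?M = "s * (k - 1)"
  have h1': "k * ?M + k * a + T \<le> k * t" using h1 by (simp add: distrib_left)
  have h2': "k * ?M + k * b + T \<le> k * t" using h2 by (simp add: distrib_left)
  have h4: "2 * a \<le> k * a" "2 * b \<le> k * b" using k by (auto intro: mult_le_mono1)
  have "k * ?M + t \<le> k * t" using h1' h2' h3 h4 by linarith
  hence "k * ?M \<le> k * t - t" by linarith
  also have "\<dots> = (k - 1) * t" by (simp add: diff_mult_distrib)
  finally have "(k - 1) * (k * s) \<le> (k - 1) * t" by (simp add: algebra_simps)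
  thus ?thesis using k by (simp add: mult.commute)
qed

lemma counting:
  assumes k: "2 \<le> k" and hyp: "\<And>F. F \<in> bipyr_facets (2*k) \<Longrightarrow> s * (k - 1) \<le> dF (2*k+1) F m"
  shows "s * k \<le> (\<Sum>j\<le>2*k+1. Poly_Mapping.lookup m j)"
proof -
  let ?t = "\<Sum>j\<le>2*k+1. Poly_Mapping.lookup m j"
  let ?T = "\<Sum>j\<in>{1..2*k}. Poly_Mapping.lookup m j"
  let ?l = "Poly_Mapping.lookup m"
  let ?M = "s * (k - 1)"
  have A: "\<And>i. i < k \<Longrightarrow> ?M + ?l 0 + (?l (2*i+1) + ?l (2*i+2)) \<le> ?t"
  proof -
    fix i assume i: "i < k"
    have "?M \<le> dF (2*k+1) {0, 2*i+1, 2*i+2} m" using hyp facetA[OF i] by blast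
    moreover have "dF (2*k+1) {0, 2*i+1, 2*i+2} m + ?l 0 + ?l (2*i+1) + ?l (2*i+2) = ?t"
      using i by (intro dF_split) auto
    ultimately show "?M + ?l 0 + (?l (2*i+1) + ?l (2*i+2)) \<le> ?t" by linarith
  qed
  have B: "\<And>i. i < k \<Longrightarrow> ?M + ?l (2*k+1) + (?l (2*i+1) + ?l (2*i+2)) \<le> ?t"
  proof -
    fix i assume i: "i < k"
    have "?M \<le> dF (2*k+1) {2*k+1, 2*i+1, 2*i+2} m" using hyp facetB[OF i] by blast
    moreover have "dF (2*k+1) {2*k+1, 2*i+1, 2*i+2} m + ?l (2*k+1) + ?l (2*i+1) + ?l (2*i+2) = ?t"
      using i by (intro dF_split) auto
    ultimately show "?M + ?l (2*k+1) + (?l (2*i+1) + ?l (2*i+2)) \<le> ?t" by linarith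
  qed
  have SA: "(\<Sum>i<k. ?M + ?l 0 + (?l (2*i+1) + ?l (2*i+2))) \<le> (\<Sum>i<k. ?t)"
    using A by (intro sum_mono) auto
  have SB: "(\<Sum>i<k. ?M + ?l (2*k+1) + (?l (2*i+1) + ?l (2*i+2))) \<le> (\<Sum>i<k. ?t)"
    using B by (intro sum_mono) auto
  have SA': "k * (?M + ?l 0) + ?T \<le> k * ?t"
    using SA by (simp only: sum_const_plus pair_sum sum_constant_nat)
  have SB': "k * (?M + ?l (2*k+1)) + ?T \<le> k * ?t"
    using SB by (simp only: sum_const_plus pair_sum sum_constant_nat)
  have tt: "?t = ?l 0 + ?T + ?l (2*k+1)" by (rule total_split)
  show ?thesis by (rule final_arith[OF k SA' SB' tt])
qed


subsection \<open>The witness\<close>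

definition Odds :: "nat \<Rightarrow> nat set" where
  "Odds k = (\<lambda>i. 2 * i + 1) ` {..<k}"

lemma Odds_iff: "v \<in> Odds k \<longleftrightarrow> odd v \<and> 1 \<le> v \<and> v \<le> 2 * k"
proof
  assume "v \<in> Odds k" thus "odd v \<and> 1 \<le> v \<and> v \<le> 2 * k" by (auto simp: Odds_def)
next
  assume v: "odd v \<and> 1 \<le> v \<and> v \<le> 2 * k"
  then obtain i where "v = 2 * i + 1" by (metis oddE)
  thus "v \<in> Odds k" using v by (auto simp: Odds_def)
qed

lemma card_Odds: "card (Odds k) = k"
  unfolding Odds_def by (subst card_image) (auto simp: inj_on_def)

lemma fin_Odds: "finite (Odds k)"
  by (simp add: Odds_def)

lemma prod_singles:
  "finite A \<Longrightarrow> (\<Prod>v\<in>A. Poly_Mapping.single (h v) (1::'k::field)) = Poly_Mapping.single (\<Sum>v\<in>A. h v) 1"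
  by (induction A rule: finite_induct) (simp_all add: mult_single)

lemma list_prod_exists:
  fixes g :: "nat \<Rightarrow> 'a::comm_monoid_mult"
  assumes "finite A"
  shows "\<exists>xs. length xs = s * card A \<and> set xs \<subseteq> g ` A \<and> prod_list xs = (\<Prod>v\<in>A. g v ^ s)"
  using assms
proof (induction A rule: finite_induct)
  case empty
  then show ?case by (intro exI[of _ "[]"]) simp
next
  case (insert x F)
  then obtain xs where xs: "length xs = s * card F" "set xs \<subseteq> g ` F" "prod_list xs = (\<Prod>v\<in>F. g v ^ s)"
    by blast
  show ?case
    by (rule exI[of _ "replicate s (g x) @ xs"]) (use insert xs in \<open>auto\<close>)
qed

lemma witness_facts:
  fixes k s :: nat
  assumes "1 \<le> s"
  defines "f0 \<equiv> (\<Prod>v\<in>Odds k. var v ^ s) :: ('k::field) mpoly"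
  shows "f0 \<noteq> 0" "homogeneous_of (s * k) f0" "f0 \<in> polyring (2*k+1)"
proof -
  let ?e = "\<Sum>v\<in>Odds k. Poly_Mapping.single v s"
  have f0: "f0 = Poly_Mapping.single ?e 1"
    unfolding f0_def var_power by (rule prod_singles[OF fin_Odds])
  show "f0 \<noteq> 0" by (simp add: f0 flip: keys_eq_empty)
  have lk: "Poly_Mapping.lookup ?e j = (if j \<in> Odds k then s else 0)" for j
    using fin_Odds by (simp add: lookup_sum lookup_single when_def)
  have ke: "Poly_Mapping.keys ?e = Odds k" using assms(1) by (auto simp: in_keys_iff lk split: if_splits)
  have "mon_deg ?e = s * k"
    unfolding mon_deg_def ke by (simp add: lk card_Odds)
  thus "homogeneous_of (s * k) f0" by (simp add: homogeneous_of_def f0)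
  show "f0 \<in> polyring (2*k+1)"
    unfolding f0_def by (intro polyring_prod polyring_power polyring_var) (auto simp: Odds_iff)
qed

lemma witness_sym:
  fixes k s :: nat
  assumes k: "2 \<le> k" and s: "1 \<le> s"
  defines "f0 \<equiv> (\<Prod>v\<in>Odds k. var v ^ s) :: ('k::field) mpoly"
  shows "f0 \<in> symbolic_power (polyring (2*k+1)) (SR_ideal (2*k)) (s * (k - 1))"
  unfolding symbolic_power_def
proof (intro CollectI conjI ballI)
  have n: "4 \<le> 2 * k" using k by simp
  show "f0 \<in> polyring (2*k+1)" using witness_facts(3)[OF s] unfolding f0_def .
  fix P assume P: "P \<in> Ass (polyring (2*k+1)) (SR_ideal (2*k) :: 'k mpoly set)"
  obtain F where F: "F \<in> bipyr_facets (2*k)" "P \<subseteq> DF (2*k) F 1" using Ass_sub_PF[OF n P] by blast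
  obtain c where c: "c \<in> F" "odd c" "1 \<le> c" "c \<le> 2*k" using facet_odd[OF n F(1)] by blast
  have cO: "c \<in> Odds k" using c by (simp add: Odds_iff)
  let ?M = "s * (k - 1)"
  let ?u = "var c ^ ?M :: 'k mpoly"
  have uS: "?u \<in> polyring (2*k+1)" using c by (intro polyring_power polyring_var) auto
  have "?u \<notin> DF (2*k) F 1"
  proof
    assume "?u \<in> DF (2*k) F 1"
    hence "1 \<le> dF (2*k+1) F (Poly_Mapping.single c ?M)"
      by (simp add: DF_def polyset_def var_power)
    moreover have "dF (2*k+1) F (Poly_Mapping.single c ?M) = 0"
      using c by (subst dF_zero_iff) auto
    ultimately show False by simp
  qed
  hence uP: "?u \<notin> P" using F(2) by blast
  have fin: "finite (Odds k - {c})" using fin_Odds by simp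
  obtain xs :: "'k mpoly list" where xs: "length xs = s * card (Odds k - {c})" "set xs \<subseteq> (\<lambda>v. var v * var c) ` (Odds k - {c})"
    "prod_list xs = (\<Prod>v\<in>Odds k - {c}. (var v * var c) ^ s)"
    using list_prod_exists[OF fin, of s "\<lambda>v. (var v * var c :: 'k mpoly)"] by blast
  have cardc: "card (Odds k - {c}) = k - 1" using cO fin_Odds by (simp add: card_Odds)
  have xsI: "set xs \<subseteq> SR_ideal (2*k)"
  proof
    fix x assume "x \<in> set xs"
    then obtain v where v: "v \<in> Odds k - {c}" "x = var v * var c" using xs(2) by blast
    have vc: "v \<noteq> c" using v by simp
    have "(\<Prod>i\<in>{v, c}. var i) \<in> (SR_ideal (2*k) :: 'k mpoly set)"
      unfolding SR_ideal_def
    proof (rule subsetD[OF gen_ideal_sub], rule CollectI, rule exI[of _ "{v, c}"], intro conjI)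
      show "{v, c} \<subseteq> {0..2 * k + 1}" using v c by (auto simp: Odds_iff)
      show "\<not> bipyr_face (2 * k) {v, c}"
        using v c k by (intro odd_pair_nonface) (auto simp: Odds_iff)
    qed simp
    thus "x \<in> SR_ideal (2*k)" using v vc by simp
  qed
  have pl: "prod_list xs \<in> ideal_pow (polyring (2*k+1)) (SR_ideal (2*k)) ?M"
    unfolding ideal_pow_def
    by (rule subsetD[OF gen_ideal_sub]) (use xs(1) cardc xsI in auto)
  have eq: "?u * f0 = var c ^ s * prod_list xs"
  proof -
    have A: "f0 = var c ^ s * (\<Prod>v\<in>Odds k - {c}. var v ^ s)"
      unfolding f0_def using cO fin_Odds by (simp add: prod.remove)
    have "(\<Prod>v\<in>Odds k - {c}. (var v * var c) ^ s) = (\<Prod>v\<in>Odds k - {c}. var v ^ s) * var c ^ ?M"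
      using cardc by (simp add: power_mult_distrib prod.distrib power_mult[symmetric] mult.commute)
    hence B: "prod_list xs = (\<Prod>v\<in>Odds k - {c}. var v ^ s) * var c ^ ?M" using xs(3) by simp
    show ?thesis unfolding A B by (simp only: ac_simps)
  qed
  have vcS: "var c ^ s \<in> (polyring (2*k+1) :: 'k mpoly set)"
    using c by (intro polyring_power polyring_var) auto
  have "var c ^ s * prod_list xs \<in> ideal_pow (polyring (2*k+1)) (SR_ideal (2*k)) ?M"
    unfolding ideal_pow_def
    by (rule ideal_mult[OF gen_ideal_is_ideal[OF pow_gens_S]])
       (rule vcS, rule pl[unfolded ideal_pow_def])
  hence "?u * f0 \<in> ideal_pow (polyring (2*k+1)) (SR_ideal (2*k)) ?M" using eq by simp
  thus "\<exists>u\<in>polyring (2 * k + 1) - P. u * f0 \<in> ideal_pow (polyring (2 * k + 1)) (SR_ideal (2 * k)) ?M"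
    using uS uP by blast
qed

theorem proposition3p12:
  fixes k s :: nat
  assumes "k \<ge> 2" and "s \<ge> 1"
  shows "alpha (symbolic_power (polyring (2 * k + 1))
            (SR_ideal (2 * k) :: ('k::field) mpoly set) (s * (k - 1))) = s * k"
  unfolding alpha_def
proof (rule Least_equality)
  let ?f0 = "(\<Prod>v\<in>Odds k. var v ^ s) :: 'k mpoly"
  show "\<exists>f\<in>symbolic_power (polyring (2 * k + 1)) (SR_ideal (2 * k) :: 'k mpoly set) (s * (k - 1)).
          f \<noteq> 0 \<and> homogeneous_of (s * k) f"
    using witness_sym[OF assms] witness_facts[OF assms(2)] by blast
next
  fix t assume "\<exists>f\<in>symbolic_power (polyring (2 * k + 1)) (SR_ideal (2 * k) :: 'k mpoly set) (s * (k - 1)).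
          f \<noteq> 0 \<and> homogeneous_of t f"
  then obtain f where f: "f \<in> symbolic_power (polyring (2 * k + 1)) (SR_ideal (2 * k) :: 'k mpoly set) (s * (k - 1))"
    "f \<noteq> 0" "homogeneous_of t f" by blast
  obtain m where m: "m \<in> Poly_Mapping.keys f" using f(2) by (auto simp flip: keys_eq_empty)
  have n: "4 \<le> 2 * k" using assms by simp
  have fS: "f \<in> polyring (2*k+1)" using f(1) by (simp add: symbolic_power_def)
  have km: "Poly_Mapping.keys m \<subseteq> {..2*k+1}" using fS m by (auto simp: polyring_def)
  have "t = mon_deg m" using f(3) m by (simp add: homogeneous_of_def)
  also have "\<dots> = (\<Sum>j\<le>2*k+1. Poly_Mapping.lookup m j)"
    unfolding mon_deg_def using km by (intro sum.mono_neutral_left) (auto simp: in_keys_iff)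
  finally have t: "t = (\<Sum>j\<le>2*k+1. Poly_Mapping.lookup m j)" .
  have "s * k \<le> (\<Sum>j\<le>2*k+1. Poly_Mapping.lookup m j)"
    by (rule counting[OF assms(1)]) (rule sympow_lower[OF n _ f(1) m], simp)
  thus "s * k \<le> t" using t by simp
qed

end
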